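(* Let $\mathbb{F}_q$ be a finite field, and let $N, L$ be integers with $1 \le L \le N/2$ and $q \ge N+L$. Let $\alpha_1,\dots,\alpha_N,f_1,\dots,f_L$ be $N+L$ pairwise distinct elements of $\mathbb{F}_q$, write $\bm\alpha=(\alpha_1,\dots,\alpha_N)$, $\bm f=(f_1,\dots,f_L)$, let $u_1,\dots,u_N\in\mathbb{F}_q$ be arbitrary nonzero elements, $\bm u=(u_1,\dots,u_N)$, and define $\bm v=(v_1,\dots,v_N)$ by $$v_j=\frac{1}{u_j}\Big(\prod_{i\in[N],\,i\neq j}(\alpha_j-\alpha_i)\Big)^{-1},\qquad j\in[N].$$ Let $\mathbf{Q}^{\bm u}_N=\mathrm{QCSA}^q_{N,L}(\bm\alpha,\bm u,\bm f)$ and $\mathbf{Q}^{\bm v}_N=\mathrm{QCSA}^q_{N,L}(\bm\alpha,\bm v,\bm f)$. Then the block-diagonal matrix $\mathbf{B}=\begin{pmatrix}\mathbf{Q}^{\bm u}_N&\mathbf{0}\\ \mathbf{0}&\mathbf{Q}^{\bm v}_N\end{pmatrix}\in\mathbb{F}_q^{2N\times 2N}$ is invertible, and the matrix $$\mathbf{M}_Q=\mathbf{S}\,\mathbf{B}^{-1}\in\mathbb{F}_q^{N\times 2N}$$ is the channel matrix of a feasible $N$-sum box over $\mathbb{F}_q$; that is, there exist $\mathbf{G},\mathbf{H}\in\mathbb{F}_q^{2N\times N}$ such that $\mathbf{G}$ is strongly self-orthogonal, the square matrix $(\mathbf{G}\ \mathbf{H})\in\mathbb{F}_q^{2N\times 2N}$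 is invertible, and $\mathbf{M}_Q=(\mathbf{0}_N\ \ \mathbf{I}_N)(\mathbf{G}\ \mathbf{H})^{-1}$. Here $\mathbf{S}\in\mathbb{F}_q^{N\times 2N}$ is the $0/1$ selection matrix $$\mathbf{S}=\left[\begin{array}{ccc|ccc} \mathbf{I}_L&\mathbf{0}_{L\times \lceil N/2\rceil}&\mathbf{0}&\mathbf{0}&\mathbf{0}&\mathbf{0}\\ \mathbf{0}&\mathbf{0}&\mathbf{I}_{\lfloor N/2\rfloor -L}&\mathbf{0}&\mathbf{0}&\mathbf{0}\\ \mathbf{0}&\mathbf{0}&\mathbf{0}&\mathbf{I}_L&\mathbf{0}_{L\times \lfloor N/2\rfloor }&\mathbf{0}\\ \mathbf{0}&\mathbf{0}&\mathbf{0}&\mathbf{0}&\mathbf{0}&\mathbf{I}_{\lceil N/2\rceil -L} \end{array}\right],$$ i.e., for $\mathbf{z}\in\mathbb{F}_q^{2N}$, $\mathbf{S}\mathbf{z}=(z_1,\dots,z_L,\ z_{L+\lceil N/2\rceil+1},\dots,z_N,\ z_{N+1},\dots,z_{N+L},\ z_{N+L+\lfloor N/2\rfloor+1},\dots,z_{2N})^\top$.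
   Context: For $\bm\alpha\in\mathbb{F}_q^{1\times n}$ with pairwise distinct entries and $\bm w=(w_1,\dots,w_n)\in\mathbb{F}_q^{1\times n}$ with nonzero entries, $\mathrm{GRS}^q_{n,k}(\bm\alpha,\bm w)$ denotes the $n\times k$ matrix whose $(i,m)$ entry is $w_i\alpha_i^{m-1}$ ($i\in[n]$, $m\in[k]$). For $\bm\beta=(\beta_1,\dots,\beta_N)$ with all $\beta_i\neq 0$, $\alpha_1,\dots,\alpha_N,f_1,\dots,f_L$ pairwise distinct, and $L\le N/2$, the matrix $\mathrm{QCSA}^q_{N,L}(\bm\alpha,\bm\beta,\bm f)\in\mathbb{F}_q^{N\times N}$ has $(i,j)$ entry $\frac{\beta_i}{f_j-\alpha_i}$ for $j\in[L]$ and $(i,L+k)$ entry $\beta_i\alpha_i^{k-1}$ for $k\in[N-L]$ (so its columns $L+1,\dots,L+\lceil N/2\rceil$ form $\mathrm{GRS}^q_{N,\lceil N/2\rceil}(\bm\alpha,\bm\beta)$). A matrix $\mathbf{G}\in\mathbb{F}_q^{2N\times N}$ is strongly self-orthogonal (SSO) iff $\mathrm{rk}(\mathbf{G})=N$ and $\mathbf{G}^\top\mathbf{J}\mathbf{G}=\mathbf{0}$, where $\mathbf{J}=\begin{pmatrix}\mathbf{0}&-\mathbf{I}_N\\ \mathbf{I}_N&\mathbf{0}\end{pmatrix}$. $\lfloor\cdot\rfloor,\lceil\cdot\rceil$ denote floor and ceiling; blocks of size zero are empty. *)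

theory Defs
  imports "Jordan_Normal_Form.Matrix" "Jordan_Normal_Form.DL_Rank"
begin

text \<open>All indices are 0-based: row/column i here corresponds to i+1 in the paper.\<close>

definition QCSA :: "nat \<Rightarrow> nat \<Rightarrow> (nat \<Rightarrow> 'a::field) \<Rightarrow> (nat \<Rightarrow> 'a) \<Rightarrow> (nat \<Rightarrow> 'a) \<Rightarrow> 'a mat" where
  "QCSA N L \<alpha> \<beta> f = mat N N (\<lambda>(i, j).
     if j < L then \<beta> i / (f j - \<alpha> i) else \<beta> i * \<alpha> i ^ (j - L))"

text \<open>Inverse of a square matrix (meaningful when it is invertible).\<close>
definition mat_inv :: "'a::field mat \<Rightarrow> 'a mat" where
  "mat_inv A = (SOME B. B \<in> carrier_mat (dim_row A) (dim_row A) \<and>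
      A * B = 1\<^sub>m (dim_row A) \<and> B * A = 1\<^sub>m (dim_row A))"

definition hcat :: "'a::zero mat \<Rightarrow> 'a mat \<Rightarrow> 'a mat" where
  "hcat A B = mat (dim_row A) (dim_col A + dim_col B)
     (\<lambda>(i, j). if j < dim_col A then A $$ (i, j) else B $$ (i, j - dim_col A))"

definition Jmat :: "nat \<Rightarrow> 'a::field mat" where
  "Jmat N = four_block_mat (0\<^sub>m N N) (- 1\<^sub>m N) (1\<^sub>m N) (0\<^sub>m N N)"

definition SSO :: "nat \<Rightarrow> 'a::field mat \<Rightarrow> bool" where
  "SSO N G \<longleftrightarrow> G \<in> carrier_mat (2 * N) N \<and> vec_space.rank (2 * N) G = N
      \<and> transpose_mat G * Jmat N * G = 0\<^sub>m N N"

definition sel_col :: "nat \<Rightarrow> nat \<Rightarrow> nat \<Rightarrow> nat" where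
  "sel_col N L r =
     (if r < L then r
      else if r < N div 2 then r + (N + 1) div 2
      else if r < N div 2 + L then N + (r - N div 2)
      else N + r)"

definition Smat :: "nat \<Rightarrow> nat \<Rightarrow> 'a::zero_neq_one mat" where
  "Smat N L = mat N (2 * N) (\<lambda>(r, c). if c = sel_col N L r then 1 else 0)"

end

theory Submission imports Defs begin

lemma poly_zero_N:
  fixes p :: "'a::field poly"
  assumes inj: "inj_on \<alpha> {..<N}" and deg: "degree p < N" and z: "\<forall>i<N. poly p (\<alpha> i) = 0"
  shows "p = 0"
proof -
  have c: "card (\<alpha> ` {..<N}) = N" using card_image[OF inj] by simp
  show ?thesis
    by (rule poly_eqI_degree[of "\<alpha> ` {..<N}"]) (use c deg z in auto)
qed

lemma lagrange_sum:
  fixes \<alpha> :: "nat \<Rightarrow> 'a::field"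
  assumes inj: "inj_on \<alpha> {..<N}" and m: "m + 2 \<le> N"
  shows "(\<Sum>i<N. \<alpha> i ^ m * inverse (\<Prod>k\<in>{..<N}-{i}. \<alpha> i - \<alpha> k)) = 0"
proof -
  define p where "p i = (\<Prod>k\<in>{..<N}-{i}. [:- \<alpha> k, 1:])" for i
  define w where "w i = inverse (\<Prod>k\<in>{..<N}-{i}. \<alpha> i - \<alpha> k)" for i
  define Q where "Q = (\<Sum>i<N. Polynomial.smult (\<alpha> i ^ m * w i) (p i))"
  have poly_p: "poly (p i) x = (\<Prod>k\<in>{..<N}-{i}. x - \<alpha> k)" for i x
    by (simp add: p_def poly_prod)
  have nz: "(\<Prod>k\<in>{..<N}-{i}. \<alpha> i - \<alpha> k) \<noteq> 0" if "i < N" for i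
    using inj that by (auto simp: inj_on_def)
  have van: "poly (p i) (\<alpha> j) = 0" if "i < N" "j < N" "i \<noteq> j" for i j
    unfolding poly_p using that by (intro prod_zero) (auto intro!: bexI[of _ j])
  have pQ: "poly Q (\<alpha> j) = \<alpha> j ^ m" if j: "j < N" for j
  proof -
    have "poly Q (\<alpha> j) = (\<Sum>i<N. \<alpha> i ^ m * w i * poly (p i) (\<alpha> j))"
      by (simp add: Q_def poly_sum)
    also have "\<dots> = \<alpha> j ^ m * w j * poly (p j) (\<alpha> j) + (\<Sum>i\<in>{..<N}-{j}. \<alpha> i ^ m * w i * poly (p i) (\<alpha> j))"
      by (rule sum.remove) (use j in auto)
    also have "(\<Sum>i\<in>{..<N}-{j}. \<alpha> i ^ m * w i * poly (p i) (\<alpha> j)) = 0"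
      by (rule sum.neutral) (use van j in auto)
    also have "w j * poly (p j) (\<alpha> j) = 1"
      unfolding w_def poly_p using nz[OF j] by simp
    moreover note calculation
    ultimately show ?thesis by (simp add: mult.assoc)
  qed
  have degp: "degree (p i) = N - 1" and lcp: "lead_coeff (p i) = 1" if "i < N" for i
  proof -
    show "degree (p i) = N - 1" unfolding p_def
      by (subst degree_prod_eq_sum_degree) (use that in auto)
    show "lead_coeff (p i) = 1" unfolding p_def lead_coeff_prod by simp
  qed
  have degQ: "degree Q < N" unfolding Q_def
    using m by (intro le_less_trans[OF degree_sum_le[of _ _ "N - 1"]]) (auto intro: le_trans[OF degree_smult_le] simp: degp)
  have "Q = monom 1 m"
    by (rule poly_eqI_degree[of "\<alpha> ` {..<N}"]) (use degQ m card_image[OF inj] pQ in \<open>auto simp: poly_monom degree_monom_eq\<close>)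
  hence "coeff Q (N - 1) = 0" using m by simp
  moreover have "coeff Q (N - 1) = (\<Sum>i<N. \<alpha> i ^ m * w i)"
  proof -
    have c1: "coeff (p i) (N - Suc 0) = 1" if "i < N" for i using degp[OF that] lcp[OF that] by simp
    show ?thesis unfolding Q_def coeff_sum by (intro sum.cong) (auto simp: c1)
  qed
  ultimately show ?thesis by (simp add: w_def)
qed

lemma aux_div: "(d::'a::field) \<noteq> 0 \<Longrightarrow> p = d * x \<Longrightarrow> c * x = p * (c / d)"
  by (simp add: field_simps)

lemma aux_div2: "(b::'a::field) \<noteq> 0 \<Longrightarrow> p * X + p * Y = p / b * (b * X + b * Y)"
  by (simp add: field_simps)

lemma QCSA_kernel:
  fixes \<alpha> \<beta> f :: "nat \<Rightarrow> 'a::field"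
  assumes inj: "inj_on \<alpha> {..<N}" and injf: "inj_on f {..<L}"
    and disj: "\<forall>i<N. \<forall>j<L. \<alpha> i \<noteq> f j" and \<beta>: "\<forall>i<N. \<beta> i \<noteq> 0" and LN: "L < N"
    and c: "c \<in> carrier_vec N" and Qc: "QCSA N L \<alpha> \<beta> f *\<^sub>v c = 0\<^sub>v N"
  shows "c = 0\<^sub>v N"
proof -
  define Pi where "Pi = (\<Prod>l<L. [:f l, -1:])"
  define Pj where "Pj j = (\<Prod>l\<in>{..<L}-{j}. [:f l, -1:])" for j
  define D where "D = (\<Sum>k<N-L. Polynomial.monom (c $ (L+k)) k)"
  define P where "P = (\<Sum>j<L. Polynomial.smult (c $ j) (Pj j)) + Pi * D"
  have pPi: "poly Pi x = (\<Prod>l<L. f l - x)" for x by (simp add: Pi_def poly_prod)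
  have pPj: "poly (Pj j) x = (\<Prod>l\<in>{..<L}-{j}. f l - x)" for j x by (simp add: Pj_def poly_prod)
  have pD: "poly D x = (\<Sum>k<N-L. c $ (L+k) * x ^ k)" for x by (simp add: D_def poly_sum poly_monom)
  have split: "poly Pi x = (f j - x) * poly (Pj j) x" if "j < L" for j x
    unfolding pPi pPj using that by (subst prod.remove[of _ j]) auto
  have degPi: "degree Pi = L" unfolding Pi_def by (subst degree_prod_eq_sum_degree) auto
  have degPj: "degree (Pj j) = L - 1" if "j < L" for j unfolding Pj_def
    by (subst degree_prod_eq_sum_degree) (use that in auto)
  have degD: "degree D \<le> N - L - 1" unfolding D_def
    by (intro degree_sum_le) (auto intro: le_trans[OF degree_monom_le])
  have Pi0: "Pi \<noteq> 0" unfolding Pi_def by (subst prod_zero_iff) auto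
  have degP: "degree P < N"
  proof -
    have "degree (\<Sum>j<L. Polynomial.smult (c $ j) (Pj j)) \<le> N - 1"
      using LN by (intro degree_sum_le) (auto intro: le_trans[OF degree_smult_le] simp: degPj)
    moreover have "degree (Pi * D) \<le> N - 1"
      using degree_mult_le[of Pi D] degPi degD LN by linarith
    ultimately have "degree P \<le> N - 1" unfolding P_def by (rule degree_add_le)
    thus ?thesis using LN by linarith
  qed
  have rowsum: "(QCSA N L \<alpha> \<beta> f *\<^sub>v c) $ i =
      (\<Sum>j<L. \<beta> i / (f j - \<alpha> i) * c $ j) + (\<Sum>k<N-L. \<beta> i * \<alpha> i ^ k * c $ (L+k))" if i: "i < N" for i
  proof -
    have "(QCSA N L \<alpha> \<beta> f *\<^sub>v c) $ i = (\<Sum>j<N. QCSA N L \<alpha> \<beta> f $$ (i,j) * c $ j)"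
      using i c by (simp add: QCSA_def scalar_prod_def lessThan_atLeast0 mult.commute)
    also have "\<dots> = (\<Sum>j\<in>{0..<L}. QCSA N L \<alpha> \<beta> f $$ (i,j) * c $ j) + (\<Sum>j\<in>{L..<N}. QCSA N L \<alpha> \<beta> f $$ (i,j) * c $ j)"
      using LN by (simp add: lessThan_atLeast0 sum.atLeastLessThan_concat)
    also have "(\<Sum>j\<in>{0..<L}. QCSA N L \<alpha> \<beta> f $$ (i,j) * c $ j) = (\<Sum>j<L. \<beta> i / (f j - \<alpha> i) * c $ j)"
      using i LN by (intro sum.cong) (auto simp: QCSA_def)
    also have "(\<Sum>j\<in>{L..<N}. QCSA N L \<alpha> \<beta> f $$ (i,j) * c $ j) = (\<Sum>k<N-L. \<beta> i * \<alpha> i ^ k * c $ (L+k))"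
    proof -
      have "(\<Sum>j\<in>{L..<N}. QCSA N L \<alpha> \<beta> f $$ (i,j) * c $ j) = (\<Sum>k\<in>{0..<N-L}. QCSA N L \<alpha> \<beta> f $$ (i,k+L) * c $ (k+L))"
        using sum.shift_bounds_nat_ivl[of "\<lambda>j. QCSA N L \<alpha> \<beta> f $$ (i,j) * c $ j" 0 L "N-L"] LN by simp
      also have "\<dots> = (\<Sum>k<N-L. \<beta> i * \<alpha> i ^ k * c $ (L+k))"
        using i by (intro sum.cong) (auto simp: QCSA_def add.commute)
      finally show ?thesis .
    qed
    finally show ?thesis .
  qed
  have Pa: "poly P (\<alpha> i) = 0" if i: "i < N" for i
  proof -
    have ne: "f j - \<alpha> i \<noteq> 0" if "j < L" for j
    proof
      assume "f j - \<alpha> i = 0"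
      hence "\<alpha> i = f j" by simp
      with disj i that show False by blast
    qed
    have "poly P (\<alpha> i) = (\<Sum>j<L. c $ j * poly (Pj j) (\<alpha> i)) + poly Pi (\<alpha> i) * (\<Sum>k<N-L. c $ (L+k) * \<alpha> i ^ k)"
      by (simp add: P_def poly_sum pD)
    also have "(\<Sum>j<L. c $ j * poly (Pj j) (\<alpha> i)) = poly Pi (\<alpha> i) * (\<Sum>j<L. c $ j / (f j - \<alpha> i))"
      unfolding sum_distrib_left
    proof (intro sum.cong refl)
      fix j assume "j \<in> {..<L}"
      then have j: "j < L" by simp
      show "c $ j * poly (Pj j) (\<alpha> i) = poly Pi (\<alpha> i) * (c $ j / (f j - \<alpha> i))"
        by (rule aux_div[OF ne[OF j] split[OF j]])
    qed
    also have "poly Pi (\<alpha> i) * (\<Sum>j<L. c $ j / (f j - \<alpha> i)) + poly Pi (\<alpha> i) * (\<Sum>k<N-L. c $ (L+k) * \<alpha> i ^ k)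
        = poly Pi (\<alpha> i) / \<beta> i * (QCSA N L \<alpha> \<beta> f *\<^sub>v c) $ i"
    proof -
      have e1: "(\<Sum>j<L. \<beta> i / (f j - \<alpha> i) * c $ j) = \<beta> i * (\<Sum>j<L. c $ j / (f j - \<alpha> i))"
        unfolding sum_distrib_left by (intro sum.cong) auto
      have e2: "(\<Sum>k<N-L. \<beta> i * \<alpha> i ^ k * c $ (L+k)) = \<beta> i * (\<Sum>k<N-L. c $ (L+k) * \<alpha> i ^ k)"
        unfolding sum_distrib_left by (intro sum.cong) auto
      show ?thesis unfolding rowsum[OF i] e1 e2 by (rule aux_div2) (use \<beta> i in auto)
    qed
    also have "\<dots> = 0" using Qc i by simp
    finally show ?thesis .
  qed
  have P0: "P = 0" by (rule poly_zero_N[OF inj degP]) (use Pa in auto)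
  have cj: "c $ j = 0" if j: "j < L" for j
  proof -
    have "poly P (f j) = c $ j * poly (Pj j) (f j)"
    proof -
      have "poly P (f j) = (\<Sum>j'<L. c $ j' * poly (Pj j') (f j)) + poly Pi (f j) * poly D (f j)"
        by (simp add: P_def poly_sum)
      also have "poly Pi (f j) = 0" using split[OF j, of "f j"] by simp
      also have "(\<Sum>j'<L. c $ j' * poly (Pj j') (f j)) = c $ j * poly (Pj j) (f j) + (\<Sum>j'\<in>{..<L}-{j}. c $ j' * poly (Pj j') (f j))"
        by (rule sum.remove) (use j in auto)
      also have "(\<Sum>j'\<in>{..<L}-{j}. c $ j' * poly (Pj j') (f j)) = 0"
        by (rule sum.neutral) (use j in \<open>auto simp: pPj intro!: prod_zero bexI[of _ j]\<close>)
      finally show ?thesis by simp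
    qed
    moreover have "poly (Pj j) (f j) \<noteq> 0" unfolding pPj using injf j
      by (auto simp: inj_on_def)
    ultimately show ?thesis using P0 by simp
  qed
  have "Pi * D = 0" using P0 cj unfolding P_def by simp
  hence D0: "D = 0" using Pi0 by simp
  have ck: "c $ (L + k) = 0" if "k < N - L" for k
  proof -
    have "coeff D k = c $ (L + k)" unfolding D_def coeff_sum using that
      by (simp add: sum.delta)
    thus ?thesis using D0 by simp
  qed
  show ?thesis
  proof (rule eq_vecI)
    fix i assume "i < dim_vec (0\<^sub>v N :: 'a vec)"
    hence i: "i < N" by simp
    show "c $ i = 0\<^sub>v N $ i"
    proof (cases "i < L")
      case True thus ?thesis using cj i by simp
    next
      case False thus ?thesis using ck[of "i - L"] i by simp
    qed
  qed (use c in auto)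
qed

lemma QCSA_carrier: "QCSA N L \<alpha> \<beta> f \<in> carrier_mat N N"
  by (simp add: QCSA_def)

lemma QCSA_inv:
  fixes \<alpha> \<beta> f :: "nat \<Rightarrow> 'a::field"
  assumes inj: "inj_on \<alpha> {..<N}" and injf: "inj_on f {..<L}"
    and disj: "\<forall>i<N. \<forall>j<L. \<alpha> i \<noteq> f j" and \<beta>: "\<forall>i<N. \<beta> i \<noteq> 0" and LN: "L < N"
  shows "\<exists>Qi. Qi \<in> carrier_mat N N \<and> QCSA N L \<alpha> \<beta> f * Qi = 1\<^sub>m N"
proof -
  have "det (QCSA N L \<alpha> \<beta> f) \<noteq> 0"
    unfolding det_0_iff_vec_prod_zero_field[OF QCSA_carrier]
    using QCSA_kernel[OF assms] by blast
  from det_non_zero_imp_unit[OF QCSA_carrier this, of "()"]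
  show ?thesis unfolding Units_def ring_mat_def by auto
qed

lemma mat_inv_eq:
  fixes A :: "'a::field mat"
  assumes A: "A \<in> carrier_mat n n" and Ai: "Ai \<in> carrier_mat n n" and AAi: "A * Ai = 1\<^sub>m n"
  shows "invertible_mat A \<and> mat_inv A = Ai"
proof -
  have AiA: "Ai * A = 1\<^sub>m n" by (rule mat_mult_left_right_inverse[OF A Ai AAi])
  have inv: "invertible_mat A" unfolding invertible_mat_def inverts_mat_def square_mat.simps
    using A Ai AAi AiA by auto
  have uniq: "B = Ai" if B: "B \<in> carrier_mat n n" "A * B = 1\<^sub>m n" for B
  proof -
    have "B = (Ai * A) * B" using AiA B by simp
    also have "\<dots> = Ai * (A * B)" using A Ai B by (simp add: assoc_mult_mat)
    also have "\<dots> = Ai" using B Ai by simp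
    finally show ?thesis .
  qed
  have "mat_inv A = Ai" unfolding mat_inv_def
    using A Ai AAi AiA by (intro some_equality) (auto intro: uniq)
  with inv show ?thesis by simp
qed

definition sg :: "nat \<Rightarrow> nat \<Rightarrow> nat \<Rightarrow> nat" where
  "sg N L j = (if j < N then (if j < (N+1) div 2 then L + j else N + L + (j - (N+1) div 2))
      else sel_col N L (j - N))"

lemma sg_alt:
  assumes "(N+1) div 2 = c" "N div 2 = d"
  shows "sg N L j = (if j < N then (if j < c then L + j else N + L + (j - c)) else
     if j - N < L then j - N else if j - N < d then j - N + c else if j - N < d + L then N + (j - N - d) else j)"
  using assms by (auto simp: sg_def sel_col_def)

lemma sg_bij:
  assumes "2 * L \<le> N"
  shows "bij_betw (sg N L) {..<2*N} {..<2*N}"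
proof -
  obtain c d where cd0: "(N+1) div 2 = c" "N div 2 = d" by blast
  have cd: "c + d = N" "d \<le> c" using cd0 by auto
  have L: "L \<le> d" using assms cd0 by linarith
  note sa = sg_alt[OF cd0]
  have sub: "sg N L ` {..<2*N} \<subseteq> {..<2*N}"
    using cd L by (auto simp: sa)
  have sup: "{..<2*N} \<subseteq> sg N L ` {..<2*N}"
  proof
    fix i assume "i \<in> {..<2*N}"
    hence i: "i < 2*N" by simp
    show "i \<in> sg N L ` {..<2*N}"
    proof (cases "i < L")
      case True thus ?thesis using i cd L by (intro image_eqI[of _ _ "N + i"]) (auto simp: sa)
    next
      case F1: False
      show ?thesis
      proof (cases "i < L + c")
        case True thus ?thesis using i cd L F1 by (intro image_eqI[of _ _ "i - L"]) (auto simp: sa)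
      next
        case F2: False
        show ?thesis
        proof (cases "i < N")
          case True thus ?thesis using i cd L F1 F2 by (intro image_eqI[of _ _ "N + (i - c)"]) (auto simp: sa)
        next
          case F3: False
          show ?thesis
          proof (cases "i < N + L")
            case True thus ?thesis using i cd L F3 by (intro image_eqI[of _ _ "N + d + (i - N)"]) (auto simp: sa)
          next
            case F4: False
            show ?thesis
            proof (cases "i < N + L + d")
              case True thus ?thesis using i cd L F4 by (intro image_eqI[of _ _ "c + (i - N - L)"]) (auto simp: sa)
            next
              case F5: False
              thus ?thesis using i cd L F4 by (intro image_eqI[of _ _ i]) (auto simp: sa)
            qed
          qed
        qed
      qed
    qed
  qed
  have im: "sg N L ` {..<2*N} = {..<2*N}" using sub sup by blast
  have inj: "inj_on (sg N L) {..<2*N}" by (rule eq_card_imp_inj_on) (simp_all add: im)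
  show ?thesis using inj im by (simp add: bij_betw_def)
qed

lemma perm_PPT:
  assumes bij: "bij_betw \<sigma> {..<n} {..<n}"
  shows "mat n n (\<lambda>(i,j). if i = \<sigma> j then 1 else 0) * transpose_mat (mat n n (\<lambda>(i,j). if i = \<sigma> j then (1::'a::field) else 0)) = 1\<^sub>m n"
proof (rule eq_matI)
  fix i k assume i: "i < dim_row (1\<^sub>m n :: 'a mat)" and k: "k < dim_col (1\<^sub>m n :: 'a mat)"
  hence i: "i < n" and k: "k < n" by auto
  define g where "g x = (if i = x then 1 else 0) * (if k = x then 1 else (0::'a))" for x
  have "(mat n n (\<lambda>(i,j). if i = \<sigma> j then 1 else 0) * transpose_mat (mat n n (\<lambda>(i,j). if i = \<sigma> j then (1::'a) else 0))) $$ (i,k)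
      = (\<Sum>j<n. g (\<sigma> j))"
    using i k by (simp add: scalar_prod_def lessThan_atLeast0 g_def)
  also have "\<dots> = (\<Sum>x<n. g x)" by (rule sum.reindex_bij_betw[OF bij])
  also have "\<dots> = (if i = k then 1 else 0)" using i k by (simp add: g_def sum.delta if_distrib cong: if_cong)
  finally show "(mat n n (\<lambda>(i,j). if i = \<sigma> j then 1 else 0) * transpose_mat (mat n n (\<lambda>(i,j). if i = \<sigma> j then (1::'a) else 0))) $$ (i,k) = 1\<^sub>m n $$ (i,k)"
    using i k by simp
qed auto

lemma perm_right:
  assumes A: "A \<in> carrier_mat m n" and i: "i < m" and j: "j < n" and sj: "\<sigma> j < n"
  shows "(A * mat n n (\<lambda>(i,j). if i = \<sigma> j then 1 else (0::'a::field))) $$ (i,j) = A $$ (i, \<sigma> j)"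
proof -
  have "(A * mat n n (\<lambda>(i,j). if i = \<sigma> j then 1 else (0::'a))) $$ (i,j) = (\<Sum>k<n. if k = \<sigma> j then A $$ (i,k) else 0)"
    using A i j by (simp add: scalar_prod_def lessThan_atLeast0 if_distrib cong: if_cong)
  also have "\<dots> = A $$ (i, \<sigma> j)" using sj by (simp add: sum.delta')
  finally show ?thesis .
qed

lemma inj_mat_distinct_cols:
  fixes A :: "'a::field mat"
  assumes A: "A \<in> carrier_mat m n" and inj: "\<And>v. v \<in> carrier_vec n \<Longrightarrow> A *\<^sub>v v = 0\<^sub>v m \<Longrightarrow> v = 0\<^sub>v n"
  shows "distinct (cols A)"
proof (rule ccontr)
  assume "\<not> distinct (cols A)"
  then obtain i j where ij: "i \<noteq> j" "i < n" "j < n" "col A i = col A j"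
    using A unfolding distinct_conv_nth by auto
  define v where "v = vec n (\<lambda>k. if k = i then 1 else if k = j then -1 else (0::'a))"
  have v: "v \<in> carrier_vec n" by (simp add: v_def)
  have "A *\<^sub>v v = 0\<^sub>v m"
  proof (rule eq_vecI)
    fix r assume "r < dim_vec (0\<^sub>v m :: 'a vec)"
    hence r: "r < m" by simp
    have "(A *\<^sub>v v) $ r = (\<Sum>k<n. (if k = i then A $$ (r,k) else 0) - (if k = j then A $$ (r,k) else 0))"
      using A r ij unfolding v_def by (simp add: scalar_prod_def lessThan_atLeast0) (intro sum.cong, auto)
    also have "\<dots> = A $$ (r,i) - A $$ (r,j)" using ij by (simp add: sum_subtractf sum.delta')
    also have "\<dots> = 0"
    proof -
      have "A $$ (r,i) = col A i $ r" "A $$ (r,j) = col A j $ r" using A r ij(2,3) by auto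
      thus ?thesis using ij(4) by simp
    qed
    finally show "(A *\<^sub>v v) $ r = 0\<^sub>v m $ r" using r by simp
  qed (use A in auto)
  hence "v = 0\<^sub>v n" using inj v by blast
  hence "v $ i = 0" using ij(2) by simp
  thus False using ij by (simp add: v_def)
qed

lemma rank_full_inj:
  fixes A :: "'a::field mat"
  assumes A: "A \<in> carrier_mat m n" and inj: "\<And>v. v \<in> carrier_vec n \<Longrightarrow> A *\<^sub>v v = 0\<^sub>v m \<Longrightarrow> v = 0\<^sub>v n"
  shows "vec_space.rank m A = n"
proof -
  have d: "distinct (cols A)" by (rule inj_mat_distinct_cols[OF A inj])
  have "\<not> module.lin_dep class_ring (module_vec TYPE('a) m) (set (cols A))"
  proof
    assume "module.lin_dep class_ring (module_vec TYPE('a) m) (set (cols A))"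
    from vec_space.lin_depE[OF A this d] obtain v where "v \<in> carrier_vec n" "v \<noteq> 0\<^sub>v n" "A *\<^sub>v v = 0\<^sub>v m" by blast
    thus False using inj by blast
  qed
  thus ?thesis using vec_space.lin_indpt_full_rank[OF A d] by blast
qed

lemma mat_vec_zero: "(A::'a::field mat) \<in> carrier_mat m n \<Longrightarrow> A *\<^sub>v 0\<^sub>v n = 0\<^sub>v m"
  by (rule eq_vecI) (auto simp: scalar_prod_def)

lemma uv_sum:
  fixes \<alpha> u :: "nat \<Rightarrow> 'a::field"
  assumes inj: "inj_on \<alpha> {..<N}" and u: "\<forall>j<N. u j \<noteq> 0" and m: "a + b + 2 \<le> N"
  shows "(\<Sum>k<N. (u k * \<alpha> k ^ a) * ((1 / u k) * inverse (\<Prod>i\<in>{..<N} - {k}. \<alpha> k - \<alpha> i) * \<alpha> k ^ b)) = 0"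
proof -
  have "(\<Sum>k<N. (u k * \<alpha> k ^ a) * ((1 / u k) * inverse (\<Prod>i\<in>{..<N} - {k}. \<alpha> k - \<alpha> i) * \<alpha> k ^ b))
      = (\<Sum>k<N. \<alpha> k ^ (a + b) * inverse (\<Prod>i\<in>{..<N} - {k}. \<alpha> k - \<alpha> i))"
  proof (intro sum.cong refl)
    fix k assume "k \<in> {..<N}"
    hence "u k \<noteq> 0" using u by auto
    thus "(u k * \<alpha> k ^ a) * ((1 / u k) * inverse (\<Prod>i\<in>{..<N} - {k}. \<alpha> k - \<alpha> i) * \<alpha> k ^ b)
      = \<alpha> k ^ (a + b) * inverse (\<Prod>i\<in>{..<N} - {k}. \<alpha> k - \<alpha> i)"
      by (simp add: power_add)
  qed
  also have "\<dots> = 0" by (rule lagrange_sum[OF inj]) (use m in simp)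
  finally show ?thesis .
qed

lemma hcat01:
  assumes "r < N" "k < 2 * N"
  shows "hcat (0\<^sub>m N N) (1\<^sub>m N) $$ (r,k) = (if k = N + r then (1::'a::field) else 0)"
  using assms by (auto simp: hcat_def)

lemma Jent:
  assumes "i < 2 * N" "k < 2 * N"
  shows "(Jmat N :: 'a::field mat) $$ (i,k) = (if k < N then (if i = k + N then 1 else 0) else (if i = k - N then -1 else 0))"
  using assms by (auto simp: Jmat_def)

theorem theorem1:
  fixes N L :: nat and \<alpha> f u :: "nat \<Rightarrow> 'a::{field, finite}"
  assumes "1 \<le> L" and "2 * L \<le> N" and "N + L \<le> card (UNIV :: 'a set)"
    and "inj_on \<alpha> {..<N}" and "inj_on f {..<L}"
    and "\<forall>i<N. \<forall>j<L. \<alpha> i \<noteq> f j"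
    and "\<forall>j<N. u j \<noteq> 0"
  shows "let v = (\<lambda>j. (1 / u j) * inverse (\<Prod>i\<in>{..<N} - {j}. \<alpha> j - \<alpha> i));
             B = four_block_mat (QCSA N L \<alpha> u f) (0\<^sub>m N N) (0\<^sub>m N N) (QCSA N L \<alpha> v f);
             MQ = Smat N L * mat_inv B
         in invertible_mat B \<and>
            (\<exists>G H. G \<in> carrier_mat (2 * N) N \<and> H \<in> carrier_mat (2 * N) N \<and>
                   SSO N G \<and> invertible_mat (hcat G H) \<and>
                   MQ = hcat (0\<^sub>m N N) (1\<^sub>m N) * mat_inv (hcat G H))"
proof -
  note inj = assms(4) and injf = assms(5) and disj = assms(6) and unz = assms(7)
  have LN: "L < N" using assms(1,2) by linarith
  define v where "v = (\<lambda>j. (1 / u j) * inverse (\<Prod>i\<in>{..<N} - {j}. \<alpha> j - \<alpha> i))"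
  define Qu where "Qu = QCSA N L \<alpha> u f"
  define Qv where "Qv = QCSA N L \<alpha> v f"
  define B where "B = four_block_mat Qu (0\<^sub>m N N) (0\<^sub>m N N) Qv"
  have prodnz: "(\<Prod>i\<in>{..<N} - {j}. \<alpha> j - \<alpha> i) \<noteq> 0" if "j < N" for j
    using inj that by (auto simp: inj_on_def)
  have vnz: "\<forall>j<N. v j \<noteq> 0" using unz prodnz by (simp add: v_def)
  obtain Qui where Qui: "Qui \<in> carrier_mat N N" "Qu * Qui = 1\<^sub>m N"
    using QCSA_inv[OF inj injf disj unz LN] unfolding Qu_def by blast
  obtain Qvi where Qvi: "Qvi \<in> carrier_mat N N" "Qv * Qvi = 1\<^sub>m N"
    using QCSA_inv[OF inj injf disj vnz LN] unfolding Qv_def by blast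
  have Quc: "Qu \<in> carrier_mat N N" and Qvc: "Qv \<in> carrier_mat N N"
    by (simp_all add: Qu_def Qv_def QCSA_carrier)
  define Bi where "Bi = four_block_mat Qui (0\<^sub>m N N) (0\<^sub>m N N) Qvi"
  have Bc: "B \<in> carrier_mat (2*N) (2*N)" unfolding B_def mult_2
    using four_block_carrier_mat[OF Quc Qvc] by simp
  have Bic: "Bi \<in> carrier_mat (2*N) (2*N)" unfolding Bi_def mult_2
    using four_block_carrier_mat[OF Qui(1) Qvi(1)] by simp
  have "B * Bi = 1\<^sub>m (2*N)" unfolding B_def Bi_def mult_2
    by (subst mult_four_block_mat[OF Quc _ _ Qvc Qui(1) _ _ Qvi(1)]) (auto simp: Quc Qvc Qui Qvi right_mult_zero_mat[OF Quc] right_mult_zero_mat[OF Qvc] left_mult_zero_mat[OF Qui(1)] left_mult_zero_mat[OF Qvi(1)])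
  from mat_inv_eq[OF Bc Bic this] have Binv: "invertible_mat B" "mat_inv B = Bi" by auto
  define \<sigma> where "\<sigma> = sg N L"
  have bij: "bij_betw \<sigma> {..<2*N} {..<2*N}" unfolding \<sigma>_def by (rule sg_bij[OF assms(2)])
  have \<sigma>lt: "\<sigma> j < 2*N" if "j < 2*N" for j using bij that by (auto simp: bij_betw_def)
  define P where "P = mat (2*N) (2*N) (\<lambda>(i,j). if i = \<sigma> j then 1 else (0::'a))"
  define PT where "PT = transpose_mat P"
  have Pc: "P \<in> carrier_mat (2*N) (2*N)" and PTc: "PT \<in> carrier_mat (2*N) (2*N)"
    by (simp_all add: P_def PT_def)
  have PPT: "P * PT = 1\<^sub>m (2*N)" unfolding P_def PT_def by (rule perm_PPT[OF bij])
  define GH where "GH = B * P"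
  have GHc: "GH \<in> carrier_mat (2*N) (2*N)" using Bc Pc by (simp add: GH_def)
  have GHent: "GH $$ (i,j) = B $$ (i, \<sigma> j)" if "i < 2*N" "j < 2*N" for i j
    unfolding GH_def P_def by (rule perm_right[where \<sigma>=\<sigma>, OF Bc that \<sigma>lt[OF that(2)]])
  have "GH * (PT * Bi) = 1\<^sub>m (2*N)"
  proof -
    have e1: "GH * (PT * Bi) = B * (P * (PT * Bi))" unfolding GH_def
      using Bc Pc PTc Bic by (intro assoc_mult_mat) auto
    have e2: "P * (PT * Bi) = (P * PT) * Bi"
      using Pc PTc Bic by (intro assoc_mult_mat[symmetric]) auto
    show ?thesis unfolding e1 e2 PPT using Bic \<open>B * Bi = 1\<^sub>m (2*N)\<close> by simp
  qed
  from mat_inv_eq[OF GHc _ this] PTc Bic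
  have GHinv: "invertible_mat GH" "mat_inv GH = PT * Bi" by auto
  define G where "G = mat (2*N) N (\<lambda>(i,j). GH $$ (i,j))"
  define H where "H = mat (2*N) N (\<lambda>(i,j). GH $$ (i,j+N))"
  have Gc: "G \<in> carrier_mat (2*N) N" and Hc: "H \<in> carrier_mat (2*N) N" by (simp_all add: G_def H_def)
  have hGH: "hcat G H = GH"
    by (rule eq_matI) (use GHc in \<open>auto simp: hcat_def G_def H_def\<close>)
  have S: "hcat (0\<^sub>m N N) (1\<^sub>m N) * PT = Smat N L"
  proof (rule eq_matI)
    fix r c' assume "r < dim_row (Smat N L :: 'a mat)" "c' < dim_col (Smat N L :: 'a mat)"
    hence r: "r < N" and c': "c' < 2*N" by (auto simp: Smat_def)
    have "(hcat (0\<^sub>m N N) (1\<^sub>m N) * PT) $$ (r,c') = (\<Sum>k<2*N. hcat (0\<^sub>m N N) (1\<^sub>m N) $$ (r,k) * P $$ (c',k))"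
      using r c' by (simp add: PT_def P_def hcat_def scalar_prod_def lessThan_atLeast0)
    also have "\<dots> = (\<Sum>k<2*N. if k = N + r then P $$ (c',k) else 0)"
      by (intro sum.cong refl) (use r in \<open>auto simp: hcat01\<close>)
    also have "\<dots> = P $$ (c', N + r)" using r by (simp add: sum.delta')
    also have "\<dots> = Smat N L $$ (r,c')" using r c'
      by (simp add: P_def Smat_def \<sigma>_def sg_def)
    finally show "(hcat (0\<^sub>m N N) (1\<^sub>m N) * PT) $$ (r,c') = Smat N L $$ (r,c')" .
  qed (auto simp: Smat_def hcat_def PT_def P_def)
  have MQ: "Smat N L * mat_inv B = hcat (0\<^sub>m N N) (1\<^sub>m N) * mat_inv (hcat G H)"
    unfolding hGH GHinv Binv S[symmetric]
    by (rule assoc_mult_mat[of _ N "2*N" _ "2*N" _ "2*N"]) (auto simp: hcat_def PTc Bic)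
  have rk: "vec_space.rank (2 * N) G = N"
  proof (rule rank_full_inj[OF Gc])
    fix w :: "'a vec" assume w: "w \<in> carrier_vec N" and Gw: "G *\<^sub>v w = 0\<^sub>v (2*N)"
    define w' where "w' = vec (2*N) (\<lambda>j. if j < N then w $ j else 0)"
    have w'c: "w' \<in> carrier_vec (2*N)" by (simp add: w'_def)
    have "GH *\<^sub>v w' = G *\<^sub>v w"
    proof (rule eq_vecI)
      fix i assume "i < dim_vec (G *\<^sub>v w)"
      hence i: "i < 2*N" using Gc by simp
      have "(GH *\<^sub>v w') $ i = (\<Sum>j\<in>{0..<2*N}. GH $$ (i,j) * w' $ j)"
        using i GHc by (simp add: scalar_prod_def w'_def)
      also have "\<dots> = (\<Sum>j\<in>{0..<N}. GH $$ (i,j) * w' $ j) + (\<Sum>j\<in>{N..<2*N}. GH $$ (i,j) * w' $ j)"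
        by (rule sum.atLeastLessThan_concat[symmetric]) auto
      also have "(\<Sum>j\<in>{N..<2*N}. GH $$ (i,j) * w' $ j) = 0"
        by (rule sum.neutral) (auto simp: w'_def)
      also have "(\<Sum>j\<in>{0..<N}. GH $$ (i,j) * w' $ j) = (G *\<^sub>v w) $ i"
        using i w Gc by (simp add: scalar_prod_def w'_def G_def)
      finally show "(GH *\<^sub>v w') $ i = (G *\<^sub>v w) $ i" by simp
    qed (use GHc Gc in auto)
    hence "GH *\<^sub>v w' = 0\<^sub>v (2*N)" using Gw by simp
    hence "(PT * Bi) *\<^sub>v (GH *\<^sub>v w') = 0\<^sub>v (2*N)" using PTc Bic by (simp add: mat_vec_zero)
    moreover have "(PT * Bi) * GH = 1\<^sub>m (2*N)"
      by (rule mat_mult_left_right_inverse[OF GHc _ \<open>GH * (PT * Bi) = 1\<^sub>m (2*N)\<close>]) (use PTc Bic in simp)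
    ultimately have "w' = 0\<^sub>v (2*N)" using w'c PTc Bic GHc
      by (metis assoc_mult_mat_vec left_mult_one_mat' mult_carrier_mat one_mult_mat_vec)
    show "w = 0\<^sub>v N"
    proof (rule eq_vecI)
      fix j assume "j < dim_vec (0\<^sub>v N :: 'a vec)"
      hence j: "j < N" by simp
      have "w' $ j = w $ j" using j by (simp add: w'_def)
      thus "w $ j = 0\<^sub>v N $ j" using \<open>w' = 0\<^sub>v (2*N)\<close> j by simp
    qed (use w in auto)
  qed
  obtain c d where cd0: "(N+1) div 2 = c" "N div 2 = d" by blast
  have cd: "c + d = N" "d \<le> c" using cd0 by auto
  have Ld: "L \<le> d" using assms(2) cd0 by linarith
  have Gent: "G $$ (i,j) = (if i < N then (if j < c then u i * \<alpha> i ^ j else 0)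
        else (if j < c then 0 else v (i-N) * \<alpha> (i-N) ^ (j - c)))" if ij: "i < 2*N" "j < N" for i j
  proof -
    have "G $$ (i,j) = B $$ (i, \<sigma> j)" using ij GHent[of i j] by (simp add: G_def)
    also have "\<sigma> j = (if j < c then L + j else N + L + (j - c))"
      using ij cd0 by (simp add: \<sigma>_def sg_def)
    finally have e: "G $$ (i,j) = B $$ (i, if j < c then L + j else N + L + (j - c))" .
    show ?thesis
    proof (cases "j < c")
      case True
      hence lt: "L + j < N" using cd Ld by linarith
      show ?thesis using e True lt ij Quc Qvc by (simp add: B_def Qu_def QCSA_def)
    next
      case False
      then obtain j' where j': "j = c + j'" using le_Suc_ex not_less by blast
      hence lt: "L + j' < N" using cd Ld ij by linarith
      have "B $$ (i, N + L + j') = (if i < N then 0 else v (i-N) * \<alpha> (i-N) ^ j')"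
        using lt ij Quc Qvc by (simp add: B_def Qv_def QCSA_def)
      thus ?thesis using e False j' by simp
    qed
  qed
  have Jc: "Jmat N \<in> carrier_mat (2*N) (2*N)" by (simp add: Jmat_def mult_2)
  have dG: "dim_row G = 2*N" "dim_col G = N" using Gc by auto
  have dJ: "dim_row (Jmat N :: 'a mat) = 2*N" "dim_col (Jmat N :: 'a mat) = 2*N" using Jc by auto
  have GJ: "(transpose_mat G * Jmat N) $$ (a,k) = (if k < N then G $$ (k+N, a) else - G $$ (k-N, a))"
    if ak: "a < N" "k < 2*N" for a k
  proof -
    have "(transpose_mat G * Jmat N) $$ (a,k) = (\<Sum>i<2*N. G $$ (i,a) * Jmat N $$ (i,k))"
      using ak by (simp add: dG dJ scalar_prod_def lessThan_atLeast0)
    also have "\<dots> = (\<Sum>i<2*N. if k < N then (if i = k + N then G $$ (k+N, a) else 0) else (if i = k - N then - G $$ (k-N, a) else 0))"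
      by (intro sum.cong refl) (use ak in \<open>auto simp: Jent\<close>)
    also have "\<dots> = (if k < N then G $$ (k+N, a) else - G $$ (k-N, a))"
      using ak by (cases "k < N") (simp_all add: sum.delta')
    finally show ?thesis .
  qed
  have orth: "transpose_mat G * Jmat N * G = 0\<^sub>m N N"
  proof (rule eq_matI)
    fix a b assume "a < dim_row (0\<^sub>m N N :: 'a mat)" "b < dim_col (0\<^sub>m N N :: 'a mat)"
    hence a: "a < N" and b: "b < N" by auto
    have "(transpose_mat G * Jmat N * G) $$ (a,b) = (\<Sum>k\<in>{0..<2*N}. (transpose_mat G * Jmat N) $$ (a,k) * G $$ (k,b))"
      using a b by (simp add: dG dJ scalar_prod_def)
    also have "\<dots> = (\<Sum>k\<in>{0..<N}. (transpose_mat G * Jmat N) $$ (a,k) * G $$ (k,b))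
       + (\<Sum>k\<in>{N..<2*N}. (transpose_mat G * Jmat N) $$ (a,k) * G $$ (k,b))"
      by (rule sum.atLeastLessThan_concat[symmetric]) auto
    also have "(\<Sum>k\<in>{0..<N}. (transpose_mat G * Jmat N) $$ (a,k) * G $$ (k,b)) = (\<Sum>k<N. G $$ (k+N,a) * G $$ (k,b))"
      by (simp add: lessThan_atLeast0) (intro sum.cong refl, use a in \<open>auto simp: GJ\<close>)
    also have "(\<Sum>k\<in>{N..<2*N}. (transpose_mat G * Jmat N) $$ (a,k) * G $$ (k,b)) = (\<Sum>k<N. - (G $$ (k,a) * G $$ (k+N,b)))"
    proof -
      have "(\<Sum>k\<in>{N..<2*N}. (transpose_mat G * Jmat N) $$ (a,k) * G $$ (k,b))
          = (\<Sum>k\<in>{0..<N}. (transpose_mat G * Jmat N) $$ (a,k+N) * G $$ (k+N,b))"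
        using sum.shift_bounds_nat_ivl[of "\<lambda>k. (transpose_mat G * Jmat N) $$ (a,k) * G $$ (k,b)" 0 N N] by (simp add: mult_2)
      also have "\<dots> = (\<Sum>k<N. - (G $$ (k,a) * G $$ (k+N,b)))"
        by (simp add: lessThan_atLeast0) (intro sum.cong refl, use a in \<open>auto simp: GJ\<close>)
      finally show ?thesis .
    qed
    also have "(\<Sum>k<N. G $$ (k+N,a) * G $$ (k,b)) + (\<Sum>k<N. - (G $$ (k,a) * G $$ (k+N,b))) = 0"
    proof (cases "a < c")
      case True
      have s1: "(\<Sum>k<N. G $$ (k+N,a) * G $$ (k,b)) = 0"
        by (rule sum.neutral) (use a True in \<open>auto simp: Gent\<close>)
      show ?thesis
      proof (cases "b < c")
        case True
        have "(\<Sum>k<N. - (G $$ (k,a) * G $$ (k+N,b))) = 0"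
          by (rule sum.neutral) (use b True in \<open>auto simp: Gent\<close>)
        thus ?thesis using s1 by simp
      next
        case False
        have "(\<Sum>k<N. - (G $$ (k,a) * G $$ (k+N,b))) = - (\<Sum>k<N. (u k * \<alpha> k ^ a) * ((1 / u k) * inverse (\<Prod>i\<in>{..<N} - {k}. \<alpha> k - \<alpha> i) * \<alpha> k ^ (b - c)))"
          unfolding sum_negf[symmetric]
          by (intro sum.cong refl) (use a b False \<open>a < c\<close> in \<open>auto simp: Gent v_def\<close>)
        also have "\<dots> = 0"
        proof -
          have h: "a + (b - c) + 2 \<le> N" using \<open>a < c\<close> b False cd by linarith
          show ?thesis using uv_sum[OF inj unz h] by simp
        qed
        finally show ?thesis using s1 by simp
      qed
    next
      case False
      have s2: "(\<Sum>k<N. - (G $$ (k,a) * G $$ (k+N,b))) = 0"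
        by (rule sum.neutral) (use a False in \<open>auto simp: Gent\<close>)
      show ?thesis
      proof (cases "b < c")
        case False
        have "(\<Sum>k<N. G $$ (k+N,a) * G $$ (k,b)) = 0"
          by (rule sum.neutral) (use b False in \<open>auto simp: Gent\<close>)
        thus ?thesis using s2 by simp
      next
        case True
        have "(\<Sum>k<N. G $$ (k+N,a) * G $$ (k,b)) = (\<Sum>k<N. (u k * \<alpha> k ^ b) * ((1 / u k) * inverse (\<Prod>i\<in>{..<N} - {k}. \<alpha> k - \<alpha> i) * \<alpha> k ^ (a - c)))"
          by (intro sum.cong refl) (use a b True \<open>\<not> a < c\<close> in \<open>auto simp: Gent v_def\<close>)
        also have "\<dots> = 0" by (rule uv_sum[OF inj unz]) (use \<open>\<not> a < c\<close> a True cd in linarith)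
        finally show ?thesis using s2 by simp
      qed
    qed
    finally show "(transpose_mat G * Jmat N * G) $$ (a,b) = 0\<^sub>m N N $$ (a,b)" using a b by simp
  qed (use Gc Jc in auto)
  have "SSO N G" unfolding SSO_def using Gc rk orth by simp
  show ?thesis unfolding Let_def v_def[symmetric] Qu_def[symmetric] Qv_def[symmetric] B_def[symmetric]
  proof -
    have "invertible_mat (hcat G H)" using GHinv(1) hGH by simp
    thus "invertible_mat B \<and> (\<exists>G H. G \<in> carrier_mat (2 * N) N \<and> H \<in> carrier_mat (2 * N) N \<and>
                   SSO N G \<and> invertible_mat (hcat G H) \<and>
                   Smat N L * mat_inv B = hcat (0\<^sub>m N N) (1\<^sub>m N) * mat_inv (hcat G H))"
      using Binv(1) Gc Hc \<open>SSO N G\<close> MQ by blast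
  qed
qed

end
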